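(* Let $f=(f_1,f_2):\mathbb{R}^2\to\mathbb{R}^2$ be a smooth one-generic mapping and let $F=(F_1,F_2)$ be as in the context. A point $p\in S_1(f)$ is a simple cusp if and only if $F(p)=\mathbf{0}$ and $DF(p)\cdot\begin{bmatrix}-\frac{\partial J}{\partial y}(p)\\ \frac{\partial J}{\partial x}(p)\end{bmatrix}\ne\mathbf{0}$; equivalently, if and only if $J(p)=0$, $F_1(p)=0$, $F_2(p)=0$, and $\frac{\partial(J,F_1)}{\partial(x,y)}(p)\ne0$ or $\frac{\partial(J,F_2)}{\partial(x,y)}(p)\ne0$.
   Context: $J=\det Df$; $F_i=\frac{\partial(J,f_i)}{\partial(x,y)}=\frac{\partial J}{\partial x}\frac{\partial f_i}{\partial y}-\frac{\partial J}{\partial y}\frac{\partial f_i}{\partial x}$, i.e. $F=Df\cdot(-\partial J/\partial y,\partial J/\partial x)^T$. $f$ is one-generic if $j^1f$ is transverse to the corank-$r$ strata of the 1-jet space for all $r$ (equivalently $dJ\neq0$ on $J^{-1}(0)$, and then $S_1(f)=J^{-1}(0)$ where $S_1(f)=\{p:\operatorname{rank}Df(p)=1\}$). For $p\in S_1(f)$ with $T_pS_1(f)=\ker Df(p)$, $p$ is a simple cusp if $p$ is a simple zero of the function $dJ(\xi)$ on $S_1(f)$, where $\xi$ is a nonvanishing vector field along $S_1(f)$ near $p$ lying in $\ker Df$ (the order of this zero does not depend on the choice of $\xi$). *)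

theory Defs
  imports "HOL-Analysis.Analysis"
begin

text \<open>Points and vectors of the plane are elements of real^2; coordinate 1 is x, coordinate 2 is y.\<close>

definition pd :: "2 \<Rightarrow> (real^2 \<Rightarrow> real) \<Rightarrow> real^2 \<Rightarrow> real" where
  "pd i g p = deriv (\<lambda>t. g (p + t *\<^sub>R axis i 1)) 0"

text \<open>C-infinity on an open set U: differentiable on U with all partial derivatives again C-infinity.\<close>
coinductive smooth_on :: "(real^2) set \<Rightarrow> (real^2 \<Rightarrow> real) \<Rightarrow> bool" where
  "(\<forall>p\<in>U. g differentiable (at p)) \<Longrightarrow> (\<forall>i. smooth_on U (pd i g)) \<Longrightarrow> smooth_on U g"

definition smooth_map :: "(real^2 \<Rightarrow> real^2) \<Rightarrow> bool" where
  "smooth_map f \<longleftrightarrow> (\<forall>i. smooth_on UNIV (\<lambda>q. f q $ i))"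

definition Dmat :: "(real^2 \<Rightarrow> real^2) \<Rightarrow> real^2 \<Rightarrow> real^2^2" where
  "Dmat f p = (\<chi> i j. pd j (\<lambda>q. f q $ i) p)"

definition Jdet :: "(real^2 \<Rightarrow> real^2) \<Rightarrow> real^2 \<Rightarrow> real" where
  "Jdet f p = det (Dmat f p)"

definition jac2 :: "(real^2 \<Rightarrow> real) \<Rightarrow> (real^2 \<Rightarrow> real) \<Rightarrow> real^2 \<Rightarrow> real" where
  "jac2 g h p = pd 1 g p * pd 2 h p - pd 2 g p * pd 1 h p"

definition Fmap :: "(real^2 \<Rightarrow> real^2) \<Rightarrow> real^2 \<Rightarrow> real^2" where
  "Fmap f p = (\<chi> i. jac2 (Jdet f) (\<lambda>q. f q $ i) p)"

definition Jperp :: "(real^2 \<Rightarrow> real^2) \<Rightarrow> real^2 \<Rightarrow> real^2" where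
  "Jperp f p = vector [- pd 2 (Jdet f) p, pd 1 (Jdet f) p]"

definition S1 :: "(real^2 \<Rightarrow> real^2) \<Rightarrow> (real^2) set" where
  "S1 f = {p. rank (Dmat f p) = 1}"

text \<open>One-genericity, in the equivalent form given in the context: dJ does not vanish on J^{-1}(0).\<close>
definition one_generic :: "(real^2 \<Rightarrow> real^2) \<Rightarrow> bool" where
  "one_generic f \<longleftrightarrow> (\<forall>p. Jdet f p = 0 \<longrightarrow> (pd 1 (Jdet f) p, pd 2 (Jdet f) p) \<noteq> (0, 0))"

definition tangent_space :: "(real^2) set \<Rightarrow> real^2 \<Rightarrow> (real^2) set" where
  "tangent_space S p = {v. \<exists>\<gamma> \<delta>. \<delta> > 0 \<and> \<gamma> 0 = p \<and> (\<forall>t\<in>{-\<delta><..<\<delta>}. \<gamma> t \<in> S)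
      \<and> (\<gamma> has_vector_derivative v) (at 0)}"

definition simple_zero_on :: "(real^2) set \<Rightarrow> (real^2) set \<Rightarrow> (real^2 \<Rightarrow> real) \<Rightarrow> real^2 \<Rightarrow> bool" where
  "simple_zero_on S U \<phi> p \<longleftrightarrow> \<phi> p = 0 \<and>
     (\<exists>\<gamma> \<delta> v d. \<delta> > 0 \<and> \<gamma> 0 = p \<and> (\<forall>t\<in>{-\<delta><..<\<delta>}. \<gamma> t \<in> S \<inter> U)
        \<and> (\<gamma> has_vector_derivative v) (at 0) \<and> v \<noteq> 0
        \<and> ((\<phi> \<circ> \<gamma>) has_real_derivative d) (at 0) \<and> d \<noteq> 0)"

definition simple_cusp :: "(real^2 \<Rightarrow> real^2) \<Rightarrow> real^2 \<Rightarrow> bool" where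
  "simple_cusp f p \<longleftrightarrow> p \<in> S1 f \<and>
     tangent_space (S1 f) p = {v. Dmat f p *v v = 0} \<and>
     (\<exists>U \<xi>. open U \<and> p \<in> U \<and> (\<forall>i. smooth_on U (\<lambda>q. \<xi> q $ i)) \<and>
        (\<forall>q\<in>U \<inter> S1 f. \<xi> q \<noteq> 0 \<and> Dmat f q *v \<xi> q = 0) \<and>
        simple_zero_on (S1 f) U
          (\<lambda>q. pd 1 (Jdet f) q * \<xi> q $ 1 + pd 2 (Jdet f) q * \<xi> q $ 2) p)"

end

theory Submission
  imports Defs
begin


lemma vec2_decomp: "(v::real^2) = v$1 *\<^sub>R axis 1 1 + v$2 *\<^sub>R axis 2 1"
  by (simp add: vec_eq_iff forall_2 axis_def)

lemma pd_from_deriv: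
  assumes "(g has_derivative D) (at p)"
  shows "pd i g p = D (axis i 1)"
proof -
  have lin: "linear D" using assms has_derivative_linear by blast
  have 1: "((\<lambda>t. p + t *\<^sub>R axis i 1) has_derivative (\<lambda>t. t *\<^sub>R axis i 1)) (at (0::real))"
    by (auto intro!: derivative_eq_intros)
  have 2: "(g has_derivative D) (at ((\<lambda>t. p + t *\<^sub>R axis i 1) 0))" using assms by simp
  have "((\<lambda>t. g (p + t *\<^sub>R axis i 1)) has_derivative (\<lambda>t. D (t *\<^sub>R axis i 1))) (at 0)"
    using has_derivative_compose[OF 1 2] by simp
  moreover have "(\<lambda>t. D (t *\<^sub>R axis i 1)) = (*) (D (axis i 1))"
    using lin by (auto simp: linear_cmul)
  ultimately have "((\<lambda>t. g (p + t *\<^sub>R axis i 1)) has_field_derivative D (axis i 1)) (at 0)"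
    by (simp add: has_field_derivative_def)
  then show ?thesis unfolding pd_def by (rule DERIV_imp_deriv)
qed

lemma pd_grad:
  assumes "g differentiable (at p)"
  shows "(g has_derivative (\<lambda>v. pd 1 g p * v$1 + pd 2 g p * v$2)) (at p)"
proof -
  obtain D where D: "(g has_derivative D) (at p)" using assms differentiable_def by blast
  have lin: "linear D" using D has_derivative_linear by blast
  have "D = (\<lambda>v. pd 1 g p * v$1 + pd 2 g p * v$2)"
  proof
    fix v :: "real^2"
    have "D v = D (v$1 *\<^sub>R axis 1 1 + v$2 *\<^sub>R axis 2 1)" using vec2_decomp[of v] by simp
    also have "\<dots> = v$1 * D (axis 1 1) + v$2 * D (axis 2 1)"
      using lin by (simp add: linear_add linear_cmul)
    finally show "D v = pd 1 g p * v$1 + pd 2 g p * v$2"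
      using pd_from_deriv[OF D] by simp
  qed
  then show ?thesis using D by simp
qed

inductive alg :: "(real^2 \<Rightarrow> real) \<Rightarrow> bool" where
  alg_sm: "smooth_on UNIV g \<Longrightarrow> alg g"
| alg_const: "alg (\<lambda>q. c)"
| alg_add: "alg g \<Longrightarrow> alg h \<Longrightarrow> alg (\<lambda>q. g q + h q)"
| alg_diff: "alg g \<Longrightarrow> alg h \<Longrightarrow> alg (\<lambda>q. g q - h q)"
| alg_mult: "alg g \<Longrightarrow> alg h \<Longrightarrow> alg (\<lambda>q. g q * h q)"

lemma alg_differentiable: "alg g \<Longrightarrow> g differentiable (at p)"
proof (induction rule: alg.induct)
  case (alg_sm g)
  from alg_sm.hyps show ?case by (cases rule: smooth_on.cases) auto
qed auto

lemma alg_pd: "alg g \<Longrightarrow> alg (pd i g)"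
proof (induction rule: alg.induct)
  case (alg_sm g)
  from alg_sm.hyps have "\<forall>i. smooth_on UNIV (pd i g)" by (cases rule: smooth_on.cases) auto
  then show ?case by (simp add: alg.alg_sm)
next
  case (alg_const c)
  have "pd i (\<lambda>q. c) = (\<lambda>q. 0)"
  proof
    fix q
    have "((\<lambda>x::real^2. c) has_derivative (\<lambda>v. 0::real)) (at q)" by simp
    from pd_from_deriv[OF this] show "pd i (\<lambda>q. c) q = 0" by simp
  qed
  then show ?case by (simp add: alg.alg_const)
next
  case (alg_add g h)
  have "pd i (\<lambda>q. g q + h q) = (\<lambda>q. pd i g q + pd i h q)"
  proof
    fix q
    obtain Dg Dh where d: "(g has_derivative Dg) (at q)" "(h has_derivative Dh) (at q)"
      using alg_differentiable[OF alg_add(1)] alg_differentiable[OF alg_add(2)] unfolding differentiable_def by blast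
    have "((\<lambda>q. g q + h q) has_derivative (\<lambda>v. Dg v + Dh v)) (at q)" using has_derivative_add[OF d] .
    from pd_from_deriv[OF this] show "pd i (\<lambda>q. g q + h q) q = pd i g q + pd i h q"
      by (simp add: pd_from_deriv[OF d(1)] pd_from_deriv[OF d(2)])
  qed
  then show ?case using alg_add.IH by (simp add: alg.alg_add)
next
  case (alg_diff g h)
  have "pd i (\<lambda>q. g q - h q) = (\<lambda>q. pd i g q - pd i h q)"
  proof
    fix q
    obtain Dg Dh where d: "(g has_derivative Dg) (at q)" "(h has_derivative Dh) (at q)"
      using alg_differentiable[OF alg_diff(1)] alg_differentiable[OF alg_diff(2)] unfolding differentiable_def by blast
    have "((\<lambda>q. g q - h q) has_derivative (\<lambda>v. Dg v - Dh v)) (at q)" using has_derivative_diff[OF d] .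
    from pd_from_deriv[OF this] show "pd i (\<lambda>q. g q - h q) q = pd i g q - pd i h q"
      by (simp add: pd_from_deriv[OF d(1)] pd_from_deriv[OF d(2)])
  qed
  then show ?case using alg_diff.IH by (simp add: alg.alg_diff)
next
  case (alg_mult g h)
  have "pd i (\<lambda>q. g q * h q) = (\<lambda>q. g q * pd i h q + pd i g q * h q)"
  proof
    fix q
    obtain Dg Dh where d: "(g has_derivative Dg) (at q)" "(h has_derivative Dh) (at q)"
      using alg_differentiable[OF alg_mult(1)] alg_differentiable[OF alg_mult(2)] unfolding differentiable_def by blast
    have "((\<lambda>q. g q * h q) has_derivative (\<lambda>v. g q * Dh v + Dg v * h q)) (at q)"
      using has_derivative_mult[OF d] .
    from pd_from_deriv[OF this] show "pd i (\<lambda>q. g q * h q) q = g q * pd i h q + pd i g q * h q"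
      by (simp add: pd_from_deriv[OF d(1)] pd_from_deriv[OF d(2)])
  qed
  moreover have "alg (\<lambda>q. g q * pd i h q)" using alg_mult.IH(2) alg_mult.hyps(1) by (rule alg.alg_mult[rotated])
  moreover have "alg (\<lambda>q. pd i g q * h q)" using alg_mult.IH(1) alg_mult.hyps(2) by (rule alg.alg_mult)
  ultimately show ?case by (simp add: alg.alg_add)
qed

lemma alg_smooth: assumes "alg g" shows "smooth_on U g"
  using assms
proof (rule smooth_on.coinduct[where X="\<lambda>_ g'. alg g'"])
  fix x1 x2 assume a: "alg x2"
  show "\<exists>U g. x1 = U \<and> x2 = g \<and> (\<forall>p\<in>U. g differentiable (at p)) \<and>
     (\<forall>i. alg (pd i g) \<or> smooth_on U (pd i g))"
    using a alg_differentiable alg_pd by blast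
qed



lemma line_deriv:
  fixes J :: "real^2 \<Rightarrow> real"
  assumes der: "\<And>q. (J has_derivative (\<lambda>v. G q \<bullet> v)) (at q)"
  shows "((\<lambda>t. J (x + t *\<^sub>R a)) has_real_derivative (G (x + t *\<^sub>R a) \<bullet> a)) (at t)"
proof -
  have 1: "((\<lambda>t. x + t *\<^sub>R a) has_derivative (\<lambda>h. h *\<^sub>R a)) (at t)"
    by (auto intro!: derivative_eq_intros)
  have 2: "(J has_derivative (\<lambda>v. G (x + t *\<^sub>R a) \<bullet> v)) (at ((\<lambda>t. x + t *\<^sub>R a) t))"
    using der by simp
  have "((\<lambda>t. J (x + t *\<^sub>R a)) has_derivative (\<lambda>h. G (x + t *\<^sub>R a) \<bullet> (h *\<^sub>R a))) (at t)"
    using has_derivative_compose[OF 1 2] by simp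
  moreover have "(\<lambda>h. G (x + t *\<^sub>R a) \<bullet> (h *\<^sub>R a)) = (*) (G (x + t *\<^sub>R a) \<bullet> a)"
    by (auto simp: inner_scaleR_right)
  ultimately show ?thesis by (simp add: has_field_derivative_def)
qed

lemma curve_exists:
  fixes J :: "real^2 \<Rightarrow> real" and G :: "real^2 \<Rightarrow> real^2"
  assumes der: "\<And>q. (J has_derivative (\<lambda>v. G q \<bullet> v)) (at q)"
    and cont: "isCont G p"
    and J0: "J p = 0" and a0: "G p \<noteq> 0" and wa: "w \<bullet> G p = 0"
  shows "\<exists>\<gamma> \<delta>. \<delta> > 0 \<and> \<gamma> 0 = p \<and> (\<forall>t\<in>{-\<delta><..<\<delta>}. J (\<gamma> t) = 0) \<and> (\<gamma> has_vector_derivative w) (at 0)"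
proof -
  define a where "a = G p"
  define A where "A = a \<bullet> a"
  have A0: "A > 0" using a0 by (simp add: A_def a_def)
  have na: "norm a > 0" using a0 by (simp add: a_def)
  have Jcont: "\<And>q. isCont J q" using der has_derivative_continuous by blast
  have "isCont (\<lambda>q. G q \<bullet> a) p" using cont by (intro continuous_intros)
  then have "((\<lambda>q. G q \<bullet> a) \<longlongrightarrow> A) (at p)" by (simp add: isCont_def A_def a_def)
  then have "eventually (\<lambda>q. G q \<bullet> a > A/2) (at p)" using A0 by (intro order_tendstoD(1)) auto
  then obtain r where r0: "r > 0" and r: "\<And>q. q \<noteq> p \<Longrightarrow> dist q p < r \<Longrightarrow> G q \<bullet> a > A/2"
    unfolding eventually_at by blast
  have rr: "G q \<bullet> a > A/2" if "dist q p < r" for q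
    using r[of q] that A0 by (cases "q = p") (auto simp: A_def a_def)
  have mono: "J (x + t2 *\<^sub>R a) - J (x + t1 *\<^sub>R a) \<ge> (t2 - t1) * (A/2)"
    if lt: "t1 < t2" and inb: "\<And>t. t1 \<le> t \<Longrightarrow> t \<le> t2 \<Longrightarrow> dist (x + t *\<^sub>R a) p < r" for x t1 t2
  proof -
    obtain z where z: "t1 < z" "z < t2"
      "J (x + t2 *\<^sub>R a) - J (x + t1 *\<^sub>R a) = (t2 - t1) * (G (x + z *\<^sub>R a) \<bullet> a)"
      using MVT2[OF lt, of "\<lambda>t. J (x + t *\<^sub>R a)" "\<lambda>t. G (x + t *\<^sub>R a) \<bullet> a"]
        line_deriv[OF der] by blast
    have "G (x + z *\<^sub>R a) \<bullet> a > A/2" using rr inb[of z] z by auto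
    then show ?thesis using z lt by (simp add: mult_left_mono)
  qed
  define t0 where "t0 = r / (4 * norm a)"
  define d0 where "d0 = r / (4 * (norm w + 1))"
  have t00: "t0 > 0" using r0 na by (simp add: t0_def)
  have nw1: "norm w + 1 > 0" by (simp add: add_nonneg_pos)
  have d00: "d0 > 0" using r0 nw1 unfolding d0_def by (intro divide_pos_pos) auto
  have box: "dist (p + s *\<^sub>R w + t *\<^sub>R a) p < r" if "\<bar>s\<bar> < d0" "\<bar>t\<bar> \<le> t0" for s t
  proof -
    have "dist (p + s *\<^sub>R w + t *\<^sub>R a) p = norm (s *\<^sub>R w + t *\<^sub>R a)" by (simp add: dist_norm)
    also have "\<dots> \<le> \<bar>s\<bar> * norm w + \<bar>t\<bar> * norm a"
      by (metis norm_scaleR norm_triangle_ineq real_norm_def)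
    finally have tri: "dist (p + s *\<^sub>R w + t *\<^sub>R a) p \<le> \<bar>s\<bar> * norm w + \<bar>t\<bar> * norm a" .
    have "\<bar>t\<bar> * norm a \<le> t0 * norm a" using that(2) by (simp add: mult_right_mono)
    also have "t0 * norm a = r/4" using na unfolding t0_def by (simp add: field_simps)
    finally have ta: "\<bar>t\<bar> * norm a \<le> r/4" .
    have "\<bar>s\<bar> * norm w < r/4"
    proof -
      have "\<bar>s\<bar> * norm w \<le> d0 * norm w" using that(1) by (simp add: mult_right_mono)
      also have "d0 * norm w < d0 * (norm w + 1)" using d00 by simp
      also have "d0 * (norm w + 1) = r/4" using nw1 unfolding d0_def by (simp add: field_simps)
      finally show ?thesis .
    qed
    then show ?thesis using tri ta r0 by linarith
  qed
  have mono2: "J (p + s *\<^sub>R w + t2 *\<^sub>R a) - J (p + s *\<^sub>R w + t1 *\<^sub>R a) \<ge> (t2 - t1) * (A/2)"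
    if "\<bar>s\<bar> < d0" "-t0 \<le> t1" "t1 < t2" "t2 \<le> t0" for s t1 t2
    using mono[of t1 t2 "p + s *\<^sub>R w"] box that by auto
  have tA: "t0 * (A/2) > 0" using t00 A0 by simp
  have "J (p + 0 *\<^sub>R w + t0 *\<^sub>R a) - J (p + 0 *\<^sub>R w + 0 *\<^sub>R a) \<ge> (t0 - 0) * (A/2)"
    using t00 d00 by (intro mono2) auto
  then have pos: "J (p + 0 *\<^sub>R w + t0 *\<^sub>R a) > 0" using tA J0 by simp
  have "J (p + 0 *\<^sub>R w + 0 *\<^sub>R a) - J (p + 0 *\<^sub>R w + (-t0) *\<^sub>R a) \<ge> (0 - (-t0)) * (A/2)"
    using t00 d00 by (intro mono2) auto
  then have neg: "J (p + 0 *\<^sub>R w + (-t0) *\<^sub>R a) < 0" using tA J0 by simp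
  have c1: "isCont (\<lambda>s. J (p + s *\<^sub>R w + t0 *\<^sub>R a)) 0"
    by (rule continuous_at_compose[OF _ Jcont, unfolded o_def]) (intro continuous_intros)
  have c2: "isCont (\<lambda>s. J (p + s *\<^sub>R w + (-t0) *\<^sub>R a)) 0"
    by (rule continuous_at_compose[OF _ Jcont, unfolded o_def]) (intro continuous_intros)
  have "eventually (\<lambda>s. J (p + s *\<^sub>R w + t0 *\<^sub>R a) > 0) (at 0)"
    using c1 pos unfolding isCont_def by (intro order_tendstoD(1)) auto
  then obtain d1' where d10: "d1' > 0" and d1': "\<And>s. s \<noteq> 0 \<Longrightarrow> dist s 0 < d1' \<Longrightarrow> J (p + s *\<^sub>R w + t0 *\<^sub>R a) > 0"
    unfolding eventually_at by blast
  define d1 where "d1 = d1'"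
  have d1: "J (p + s *\<^sub>R w + t0 *\<^sub>R a) > 0" if "dist s 0 < d1" for s
    using d1'[of s] that pos unfolding d1_def by (cases "s = 0") auto
  have d10: "d1 > 0" using d10 by (simp add: d1_def)
  have "eventually (\<lambda>s. J (p + s *\<^sub>R w + (-t0) *\<^sub>R a) < 0) (at 0)"
    using c2 neg unfolding isCont_def by (intro order_tendstoD(2)) auto
  then obtain d2' where d20: "d2' > 0" and d2': "\<And>s. s \<noteq> 0 \<Longrightarrow> dist s 0 < d2' \<Longrightarrow> J (p + s *\<^sub>R w + (-t0) *\<^sub>R a) < 0"
    unfolding eventually_at by blast
  define d2 where "d2 = d2'"
  have d2: "J (p + s *\<^sub>R w + (-t0) *\<^sub>R a) < 0" if "dist s 0 < d2" for s
    using d2'[of s] that neg unfolding d2_def by (cases "s = 0") auto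
  have d20: "d2 > 0" using d20 by (simp add: d2_def)
  define \<delta> where "\<delta> = min d0 (min d1 d2)"
  have \<delta>0: "\<delta> > 0" using d00 d10 d20 by (simp add: \<delta>_def)
  define \<tau> where "\<tau> s = (SOME t. -t0 \<le> t \<and> t \<le> t0 \<and> J (p + s *\<^sub>R w + t *\<^sub>R a) = 0)" for s
  have tau: "-t0 \<le> \<tau> s \<and> \<tau> s \<le> t0 \<and> J (p + s *\<^sub>R w + \<tau> s *\<^sub>R a) = 0" if "\<bar>s\<bar> < \<delta>" for s
  proof -
    have "continuous_on {-t0..t0} (\<lambda>t. J (p + s *\<^sub>R w + t *\<^sub>R a))"
      by (intro continuous_at_imp_continuous_on ballI continuous_at_compose[OF _ Jcont, unfolded o_def])
         (intro continuous_intros)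
    moreover have "J (p + s *\<^sub>R w + (-t0) *\<^sub>R a) \<le> 0" using d2[of s] that by (simp add: \<delta>_def)
    moreover have "0 \<le> J (p + s *\<^sub>R w + t0 *\<^sub>R a)" using d1[of s] that by (simp add: \<delta>_def)
    ultimately have "\<exists>t\<ge>-t0. t \<le> t0 \<and> J (p + s *\<^sub>R w + t *\<^sub>R a) = 0"
      using IVT'[of "\<lambda>t. J (p + s *\<^sub>R w + t *\<^sub>R a)" "-t0" 0 t0] t00 by simp
    then have "\<exists>t. -t0 \<le> t \<and> t \<le> t0 \<and> J (p + s *\<^sub>R w + t *\<^sub>R a) = 0" by blast
    from someI_ex[OF this] show ?thesis unfolding \<tau>_def .
  qed
  have bound: "\<bar>\<tau> s\<bar> * (A/2) \<le> \<bar>J (p + s *\<^sub>R w)\<bar>" if "\<bar>s\<bar> < \<delta>" for s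
  proof -
    have s0: "\<bar>s\<bar> < d0" using that by (simp add: \<delta>_def)
    have z: "J (p + s *\<^sub>R w + \<tau> s *\<^sub>R a) = 0" and b: "-t0 \<le> \<tau> s" "\<tau> s \<le> t0" using tau[OF that] by auto
    consider "\<tau> s = 0" | "\<tau> s > 0" | "\<tau> s < 0" by linarith
    then show ?thesis
    proof cases
      case 2
      have "J (p + s *\<^sub>R w + \<tau> s *\<^sub>R a) - J (p + s *\<^sub>R w + 0 *\<^sub>R a) \<ge> (\<tau> s - 0) * (A/2)"
        using mono2[OF s0, of 0 "\<tau> s"] 2 b t00 by simp
      then show ?thesis using z 2 by simp
    next
      case 3
      have "J (p + s *\<^sub>R w + 0 *\<^sub>R a) - J (p + s *\<^sub>R w + \<tau> s *\<^sub>R a) \<ge> (0 - \<tau> s) * (A/2)"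
        using mono2[OF s0, of "\<tau> s" 0] 3 b t00 by simp
      then show ?thesis using z 3 by simp
    qed simp
  qed
  have kd: "((\<lambda>s. J (p + s *\<^sub>R w)) has_real_derivative 0) (at 0)"
    using line_deriv[OF der, of p w 0] wa by (simp add: inner_commute)
  then have k: "((\<lambda>s. J (p + s *\<^sub>R w) / s) \<longlongrightarrow> 0) (at 0)"
    using J0 by (simp add: has_field_derivative_iff)
  have "((\<lambda>s. (2/A) * \<bar>J (p + s *\<^sub>R w) / s\<bar>) \<longlongrightarrow> 0) (at 0)"
    using k by (intro tendsto_mult_right_zero tendsto_rabs_zero)
  moreover have "eventually (\<lambda>s. norm (\<tau> s / s) \<le> (2/A) * \<bar>J (p + s *\<^sub>R w) / s\<bar>) (at 0)"
  proof -
    have "eventually (\<lambda>s. \<bar>s\<bar> < \<delta>) (at (0::real))"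
      using \<delta>0 by (auto simp: eventually_at intro!: exI[of _ \<delta>])
    then show ?thesis
    proof (rule eventually_mono)
      fix s assume "\<bar>s\<bar> < \<delta>"
      from bound[OF this] have "\<bar>\<tau> s\<bar> \<le> (2/A) * \<bar>J (p + s *\<^sub>R w)\<bar>"
        using A0 by (simp add: field_simps)
      then have "\<bar>\<tau> s\<bar> / \<bar>s\<bar> \<le> ((2/A) * \<bar>J (p + s *\<^sub>R w)\<bar>) / \<bar>s\<bar>"
        by (rule divide_right_mono) simp
      moreover have "norm (\<tau> s / s) = \<bar>\<tau> s\<bar> / \<bar>s\<bar>" by (simp add: abs_divide)
      moreover have "(2/A) * \<bar>J (p + s *\<^sub>R w) / s\<bar> = ((2/A) * \<bar>J (p + s *\<^sub>R w)\<bar>) / \<bar>s\<bar>"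
        by (simp add: abs_divide)
      ultimately show "norm (\<tau> s / s) \<le> (2/A) * \<bar>J (p + s *\<^sub>R w) / s\<bar>"
        by simp
    qed
  qed
  ultimately have "((\<lambda>s. \<tau> s / s) \<longlongrightarrow> 0) (at 0)" by (rule Lim_null_comparison[rotated])
  moreover have tau0: "\<tau> 0 = 0" using bound[of 0] \<delta>0 J0 A0
    by (simp add: mult_le_0_iff)
  ultimately have "(\<tau> has_real_derivative 0) (at 0)"
    by (simp add: has_field_derivative_iff)
  then have e2: "((\<lambda>s. \<tau> s *\<^sub>R a) has_vector_derivative (\<tau> 0 *\<^sub>R 0 + 0 *\<^sub>R a)) (at 0)"
    by (intro has_vector_derivative_scaleR has_vector_derivative_const)
  have e1: "((\<lambda>s. s *\<^sub>R w) has_vector_derivative (0 *\<^sub>R 0 + 1 *\<^sub>R w)) (at 0)"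
    by (intro has_vector_derivative_scaleR has_vector_derivative_const DERIV_ident)
  have "((\<lambda>s. p + s *\<^sub>R w + \<tau> s *\<^sub>R a) has_vector_derivative (0 + (0 *\<^sub>R 0 + 1 *\<^sub>R w) + (\<tau> 0 *\<^sub>R 0 + 0 *\<^sub>R a))) (at 0)"
    by (intro has_vector_derivative_add e1 e2 has_vector_derivative_const)
  then have "((\<lambda>s. p + s *\<^sub>R w + \<tau> s *\<^sub>R a) has_vector_derivative w) (at 0)" by simp
  then show ?thesis
    using \<delta>0 tau tau0 by (intro exI[of _ "\<lambda>s. p + s *\<^sub>R w + \<tau> s *\<^sub>R a"] exI[of _ \<delta>]) auto
qed



lemma sq_pos: "(r1::real, r2) \<noteq> (0,0) \<Longrightarrow> r1^2 + r2^2 > 0"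
  by (simp add: sum_power2_gt_zero_iff)

lemma perp1: fixes r1 r2 x1 x2 :: real
  assumes "r1 * x1 + r2 * x2 = 0" "(r1, r2) \<noteq> (0,0)"
  shows "x1 = ((x1 * (-r2) + x2 * r1)/(r1^2 + r2^2)) * (-r2)"
proof -
  have N: "r1^2 + r2^2 \<noteq> 0" using sq_pos[OF assms(2)] by linarith
  have "x1 * (r1^2 + r2^2) = (x1 * (-r2) + x2 * r1) * (-r2)"
  proof -
    have "x1 * (r1^2 + r2^2) - (x1 * (-r2) + x2 * r1) * (-r2) = r1 * (r1 * x1 + r2 * x2)"
      by (simp add: algebra_simps power2_eq_square)
    then show ?thesis using assms(1) by simp
  qed
  then show ?thesis using N by (simp add: field_simps)
qed

lemma perp2: fixes r1 r2 x1 x2 :: real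
  assumes "r1 * x1 + r2 * x2 = 0" "(r1, r2) \<noteq> (0,0)"
  shows "x2 = ((x1 * (-r2) + x2 * r1)/(r1^2 + r2^2)) * r1"
proof -
  have N: "r1^2 + r2^2 \<noteq> 0" using sq_pos[OF assms(2)] by linarith
  have "x2 * (r1^2 + r2^2) = (x1 * (-r2) + x2 * r1) * r1"
  proof -
    have "x2 * (r1^2 + r2^2) - (x1 * (-r2) + x2 * r1) * r1 = r2 * (r1 * x1 + r2 * x2)"
      by (simp add: algebra_simps power2_eq_square)
    then show ?thesis using assms(1) by simp
  qed
  then show ?thesis using N by (simp add: field_simps)
qed

definition grad :: "(real^2 \<Rightarrow> real) \<Rightarrow> real^2 \<Rightarrow> real^2" where
  "grad g q = pd 1 g q *\<^sub>R axis 1 1 + pd 2 g q *\<^sub>R axis 2 1"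

lemma grad_nth [simp]: "grad g q $ 1 = pd 1 g q" "grad g q $ 2 = pd 2 g q"
  by (simp_all add: grad_def axis_def)

lemma grad_inner: "grad g q \<bullet> v = pd 1 g q * v$1 + pd 2 g q * v$2"
  by (simp add: inner_vec_def sum_2)

lemma alg_grad_deriv: "alg g \<Longrightarrow> (g has_derivative (\<lambda>v. grad g q \<bullet> v)) (at q)"
  using pd_grad[OF alg_differentiable] by (simp add: grad_inner)

lemma alg_cont: "alg g \<Longrightarrow> isCont g q"
  using alg_differentiable differentiable_imp_continuous_within by blast

lemma alg_cont_on: "alg g \<Longrightarrow> continuous_on UNIV g"
  using alg_cont continuous_at_imp_continuous_on by blast

lemma alg_grad_cont: "alg g \<Longrightarrow> isCont (grad g) q"
  unfolding grad_def using alg_cont[OF alg_pd] by (intro continuous_intros) auto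

lemma pd_mult_at:
  assumes "g differentiable (at q)" "h differentiable (at q)"
  shows "pd i (\<lambda>q. g q * h q) q = g q * pd i h q + pd i g q * h q"
proof -
  obtain Dg Dh where d: "(g has_derivative Dg) (at q)" "(h has_derivative Dh) (at q)"
    using assms unfolding differentiable_def by blast
  have "((\<lambda>q. g q * h q) has_derivative (\<lambda>v. g q * Dh v + Dg v * h q)) (at q)"
    using has_derivative_mult[OF d] .
  from pd_from_deriv[OF this] show ?thesis
    by (simp add: pd_from_deriv[OF d(1)] pd_from_deriv[OF d(2)])
qed

lemma pd_diff_at:
  assumes "g differentiable (at q)" "h differentiable (at q)"
  shows "pd i (\<lambda>q. g q - h q) q = pd i g q - pd i h q"
proof -
  obtain Dg Dh where d: "(g has_derivative Dg) (at q)" "(h has_derivative Dh) (at q)"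
    using assms unfolding differentiable_def by blast
  have "((\<lambda>q. g q - h q) has_derivative (\<lambda>v. Dg v - Dh v)) (at q)"
    using has_derivative_diff[OF d] .
  from pd_from_deriv[OF this] show ?thesis
    by (simp add: pd_from_deriv[OF d(1)] pd_from_deriv[OF d(2)])
qed

lemma comp_deriv:
  assumes "(h has_derivative D) (at p)" "(\<gamma> has_vector_derivative v) (at 0)" "\<gamma> 0 = p"
  shows "((\<lambda>t. h (\<gamma> t)) has_real_derivative D v) (at 0)"
proof -
  have 1: "(\<gamma> has_derivative (\<lambda>t. t *\<^sub>R v)) (at 0)"
    using assms(2) by (simp add: has_vector_derivative_def)
  have 2: "(h has_derivative D) (at (\<gamma> 0))" using assms(1,3) by simp
  have lin: "linear D" using assms(1) has_derivative_linear by blast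
  have "((\<lambda>t. h (\<gamma> t)) has_derivative (\<lambda>t. D (t *\<^sub>R v))) (at 0)"
    using has_derivative_compose[OF 1 2] by simp
  moreover have "(\<lambda>t. D (t *\<^sub>R v)) = (*) (D v)"
    using lin by (auto simp: linear_cmul)
  ultimately show ?thesis by (simp add: has_field_derivative_def)
qed

lemma along:
  assumes g: "(\<gamma> has_vector_derivative v) (at 0)" "\<gamma> 0 = p"
    and dA: "((\<lambda>t. A (\<gamma> t)) has_real_derivative dA) (at 0)"
    and B: "(B has_derivative (\<lambda>u. GB \<bullet> u)) (at p)"
    and h: "h differentiable (at p)" and Bp: "B p = 0"
    and ev: "eventually (\<lambda>t. A (\<gamma> t) = h (\<gamma> t) * B (\<gamma> t)) (nhds 0)"
  shows "dA = h p * (GB \<bullet> v)"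
proof -
  obtain Dh where Dh: "(h has_derivative Dh) (at p)" using h differentiable_def by blast
  have 1: "((\<lambda>t. h (\<gamma> t)) has_real_derivative Dh v) (at 0)" by (rule comp_deriv[OF Dh g])
  have 2: "((\<lambda>t. B (\<gamma> t)) has_real_derivative GB \<bullet> v) (at 0)" using comp_deriv[OF B g] by simp
  have "((\<lambda>t. h (\<gamma> t) * B (\<gamma> t)) has_real_derivative (Dh v * B (\<gamma> 0) + (GB \<bullet> v) * h (\<gamma> 0))) (at 0)"
    using DERIV_mult[OF 1 2] .
  then have 3: "((\<lambda>t. h (\<gamma> t) * B (\<gamma> t)) has_real_derivative h p * (GB \<bullet> v)) (at 0)"
    using g(2) Bp by (simp add: mult.commute)
  have "((\<lambda>t. A (\<gamma> t)) has_real_derivative h p * (GB \<bullet> v)) (at 0)"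
    using DERIV_cong_ev[OF refl ev refl] 3 by simp
  then show ?thesis using dA DERIV_unique by blast
qed


definition oth :: "2 \<Rightarrow> 2" where "oth i = (if i = 1 then 2 else 1)"

lemma oth_cases: "(i = 1 \<and> oth i = 2) \<or> (i = 2 \<and> oth i = 1)"
  using exhaust_2[of i] by (auto simp: oth_def)

locale setting =
  fixes f :: "real^2 \<Rightarrow> real^2"
  assumes sm: "smooth_map f" and og: "one_generic f"
begin

definition P :: "2 \<Rightarrow> 2 \<Rightarrow> real^2 \<Rightarrow> real" where "P i j = pd j (\<lambda>q. f q $ i)"

lemma alg_f: "alg (\<lambda>q. f q $ i)"
  using sm by (simp add: smooth_map_def alg_sm)

lemma alg_P: "alg (P i j)"
  unfolding P_def by (rule alg_pd[OF alg_f])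

lemma Dmat_nth [simp]: "Dmat f q $ i $ j = P i j q"
  by (simp add: Dmat_def P_def)

lemma J_eq: "Jdet f = (\<lambda>q. P 1 1 q * P 2 2 q - P 1 2 q * P 2 1 q)"
  by (rule ext) (simp add: Jdet_def det_2)

lemma alg_J: "alg (Jdet f)"
  unfolding J_eq by (intro alg_diff alg_mult alg_P)

lemma alg_pdJ: "alg (pd k (Jdet f))"
  by (rule alg_pd[OF alg_J])

lemma F_eq: "(\<lambda>q. Fmap f q $ i) = (\<lambda>q. pd 1 (Jdet f) q * P i 2 q - pd 2 (Jdet f) q * P i 1 q)"
  by (rule ext) (simp add: Fmap_def jac2_def P_def)

lemma alg_F: "alg (\<lambda>q. Fmap f q $ i)"
  unfolding F_eq by (intro alg_diff alg_mult alg_P alg_pdJ)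

lemma pdJ_formula: "pd k (Jdet f) q = P 1 1 q * pd k (P 2 2) q + pd k (P 1 1) q * P 2 2 q
     - (P 1 2 q * pd k (P 2 1) q + pd k (P 1 2) q * P 2 1 q)"
proof -
  have d: "\<And>i j. P i j differentiable (at q)" using alg_differentiable[OF alg_P] by blast
  have "pd k (Jdet f) q = pd k (\<lambda>q. P 1 1 q * P 2 2 q) q - pd k (\<lambda>q. P 1 2 q * P 2 1 q) q"
    unfolding J_eq
    by (rule pd_diff_at; rule alg_differentiable; intro alg_mult alg_P)
  then show ?thesis by (simp add: pd_mult_at[OF d d])
qed

lemma S1_iff: "q \<in> S1 f \<longleftrightarrow> Jdet f q = 0"
proof -
  have r2: "rank (Dmat f q) \<le> 2" using rank_bound[of "Dmat f q"] by simp
  have "q \<in> S1 f \<longleftrightarrow> Jdet f q = 0 \<and> Dmat f q \<noteq> 0"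
    using r2 det_eq_0_rank[of "Dmat f q"] rank_eq_0[of "Dmat f q"]
    by (auto simp: S1_def Jdet_def)
  moreover have "Dmat f q \<noteq> 0" if "Jdet f q = 0"
  proof
    assume z: "Dmat f q = 0"
    have P0: "P i j q = 0" for i j using z
      by (metis Dmat_nth vec_0 zero_index)
    have "pd 1 (Jdet f) q = 0" "pd 2 (Jdet f) q = 0" by (simp_all add: pdJ_formula P0)
    then show False using og that by (simp add: one_generic_def)
  qed
  ultimately show ?thesis by blast
qed

lemma S1_row: assumes "q \<in> S1 f" shows "\<exists>i. (P i 1 q, P i 2 q) \<noteq> (0,0)"
proof (rule ccontr)
  assume "\<not> ?thesis"
  then have "Dmat f q = 0" by (simp add: vec_eq_iff forall_2)
  then have "rank (Dmat f q) = 0" by simp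
  then show False using assms by (simp add: S1_def)
qed

lemma J_cross: "Jdet f q = 0 \<longleftrightarrow> P i 1 q * P (oth i) 2 q - P i 2 q * P (oth i) 1 q = 0"
  using oth_cases[of i] by (auto simp: J_eq algebra_simps)

lemma Mv_nth: "(Dmat f q *v v) $ i = P i 1 q * v$1 + P i 2 q * v$2"
  by (simp add: matrix_vector_mult_def sum_2)

lemma Jperp_nth [simp]: "Jperp f q $ 1 = - pd 2 (Jdet f) q" "Jperp f q $ 2 = pd 1 (Jdet f) q"
  by (simp_all add: Jperp_def)

lemma MJ: "Dmat f q *v Jperp f q = Fmap f q"
  by (simp add: vec_eq_iff forall_2 Mv_nth Fmap_def jac2_def P_def algebra_simps)

lemma DF_nth: "(Dmat (Fmap f) q *v Jperp f q) $ i = jac2 (Jdet f) (\<lambda>q. Fmap f q $ i) q"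
  by (simp add: matrix_vector_mult_def sum_2 Dmat_def jac2_def algebra_simps)

lemma gradF_w: "grad (\<lambda>q. Fmap f q $ i) q \<bullet> Jperp f q = jac2 (Jdet f) (\<lambda>q. Fmap f q $ i) q"
  by (simp add: grad_inner jac2_def algebra_simps)

end


locale at_point = setting +
  fixes p :: "real^2"
  assumes pS: "p \<in> S1 f"
begin

abbreviation "w \<equiv> Jperp f p"

lemma J0: "Jdet f p = 0" using pS S1_iff by blast

lemma a_nz: "(pd 1 (Jdet f) p, pd 2 (Jdet f) p) \<noteq> (0,0)"
  using og J0 by (simp add: one_generic_def)

lemma grad_nz: "grad (Jdet f) p \<noteq> 0"
  using a_nz by (auto simp: vec_eq_iff forall_2)

lemma w_nz: "w \<noteq> 0"
  using a_nz by (auto simp: vec_eq_iff forall_2)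

lemma w_perp: "w \<bullet> grad (Jdet f) p = 0"
  by (simp add: inner_vec_def sum_2)

lemma curve: "\<exists>\<gamma> \<delta>. \<delta> > 0 \<and> \<gamma> 0 = p \<and> (\<forall>t\<in>{-\<delta><..<\<delta>}. \<gamma> t \<in> S1 f) \<and> (\<gamma> has_vector_derivative w) (at 0)"
  using curve_exists[of "Jdet f" "grad (Jdet f)" p w, OF alg_grad_deriv[OF alg_J] alg_grad_cont[OF alg_J]
      J0 grad_nz w_perp] S1_iff by blast

lemma tangent: "tangent_space (S1 f) p = {v. \<exists>c. v = c *\<^sub>R w}"
proof (intro set_eqI iffI)
  fix v assume "v \<in> tangent_space (S1 f) p"
  then obtain \<gamma> \<delta> where d0: "\<delta> > 0" and g0: "\<gamma> 0 = p" and gS: "\<forall>t\<in>{-\<delta><..<\<delta>}. \<gamma> t \<in> S1 f"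
    and gv: "(\<gamma> has_vector_derivative v) (at 0)"
    unfolding tangent_space_def by blast
  have 1: "((\<lambda>t. Jdet f (\<gamma> t)) has_real_derivative grad (Jdet f) p \<bullet> v) (at 0)"
    using comp_deriv[OF alg_grad_deriv[OF alg_J] gv g0] .
  have 2: "((\<lambda>t. Jdet f (\<gamma> t)) has_real_derivative 0) (at 0)"
    by (rule has_field_derivative_transform_within_open[of "\<lambda>t. 0" 0 0 "{-\<delta><..<\<delta>}"])
       (use d0 gS S1_iff in auto)
  have z: "grad (Jdet f) p \<bullet> v = 0" using DERIV_unique[OF 1 2] .
  then have z': "pd 1 (Jdet f) p * v$1 + pd 2 (Jdet f) p * v$2 = 0" by (simp add: grad_inner)
  define c where "c = (v$1 * (- pd 2 (Jdet f) p) + v$2 * pd 1 (Jdet f) p) / ((pd 1 (Jdet f) p)^2 + (pd 2 (Jdet f) p)^2)"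
  have "v = c *\<^sub>R w"
    using perp1[OF z' a_nz] perp2[OF z' a_nz]
    by (simp add: vec_eq_iff forall_2 c_def)
  then show "v \<in> {v. \<exists>c. v = c *\<^sub>R w}" by blast
next
  fix v assume "v \<in> {v. \<exists>c. v = c *\<^sub>R w}"
  then obtain c where vc: "v = c *\<^sub>R w" by blast
  show "v \<in> tangent_space (S1 f) p"
  proof (cases "c = 0")
    case True
    then show ?thesis unfolding tangent_space_def using vc pS
      by (intro CollectI exI[of _ "\<lambda>t. p"] exI[of _ 1]) auto
  next
    case False
    obtain \<gamma> \<delta> where d0: "\<delta> > 0" and g0: "\<gamma> 0 = p" and gS: "\<forall>t\<in>{-\<delta><..<\<delta>}. \<gamma> t \<in> S1 f"
      and gv: "(\<gamma> has_vector_derivative w) (at 0)" using curve by blast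
    have cd: "((\<lambda>t. c * t) has_vector_derivative c) (at 0)"
      using DERIV_cmult_Id[of c 0] by (simp add: has_real_derivative_iff_has_vector_derivative)
    have "(\<gamma> \<circ> (\<lambda>t. c * t) has_vector_derivative c *\<^sub>R w) (at 0)"
      by (rule vector_diff_chain_at[OF cd]) (simp add: gv)
    moreover have "(\<gamma> \<circ> (\<lambda>t. c * t)) t \<in> S1 f" if "t \<in> {-(\<delta>/\<bar>c\<bar>)<..<\<delta>/\<bar>c\<bar>}" for t
    proof -
      have "\<bar>t\<bar> < \<delta>/\<bar>c\<bar>" using that by auto
      then have "\<bar>c * t\<bar> < \<delta>" using False by (simp add: abs_mult field_simps)
      then have "c * t \<in> {-\<delta><..<\<delta>}" by (simp add: abs_less_iff)
      then show ?thesis using gS by simp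
    qed
    moreover have "\<delta>/\<bar>c\<bar> > 0" using d0 False by simp
    ultimately show ?thesis unfolding tangent_space_def using vc g0
      by (intro CollectI exI[of _ "\<gamma> \<circ> (\<lambda>t. c * t)"] exI[of _ "\<delta>/\<bar>c\<bar>"]) auto
  qed
qed

lemma kernel: assumes "Fmap f p = 0" shows "{v. Dmat f p *v v = 0} = {v. \<exists>c. v = c *\<^sub>R w}"
proof (intro set_eqI iffI)
  fix v assume "v \<in> {v. Dmat f p *v v = 0}"
  then have "Dmat f p *v v = 0" by simp
  obtain i where r: "(P i 1 p, P i 2 p) \<noteq> (0,0)" using S1_row[OF pS] by blast
  define N where "N = (P i 1 p)^2 + (P i 2 p)^2"
  have hv: "P i 1 p * v$1 + P i 2 p * v$2 = 0"
    using \<open>Dmat f p *v v = 0\<close> Mv_nth[of p v i] by simp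
  have hw: "P i 1 p * w$1 + P i 2 p * w$2 = 0"
    using assms MJ[of p] Mv_nth[of p w i] by simp
  define cv where "cv = (v$1 * (- P i 2 p) + v$2 * P i 1 p) / N"
  define cw where "cw = (w$1 * (- P i 2 p) + w$2 * P i 1 p) / N"
  have v1: "v$1 = cv * (- P i 2 p)" "v$2 = cv * P i 1 p"
    using perp1[OF hv r] perp2[OF hv r] by (simp_all add: cv_def N_def)
  have w1: "w$1 = cw * (- P i 2 p)" "w$2 = cw * P i 1 p"
    using perp1[OF hw r] perp2[OF hw r] by (simp_all add: cw_def N_def del: Jperp_nth)
  have "cw \<noteq> 0" using w_nz w1 by (auto simp: vec_eq_iff forall_2 simp del: Jperp_nth)
  then have "v = (cv / cw) *\<^sub>R w"
    using v1 w1 by (auto simp: vec_eq_iff forall_2 simp del: Jperp_nth)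
  then show "v \<in> {v. \<exists>c. v = c *\<^sub>R w}" by blast
next
  fix v assume "v \<in> {v. \<exists>c. v = c *\<^sub>R w}"
  then obtain c where "v = c *\<^sub>R w" by blast
  then have "Dmat f p *v v = c *\<^sub>R (Dmat f p *v w)" by (simp add: matrix_vector_mult_scaleR)
  then show "v \<in> {v. Dmat f p *v v = 0}" using assms MJ[of p] by simp
qed

lemma TK_iff: "tangent_space (S1 f) p = {v. Dmat f p *v v = 0} \<longleftrightarrow> Fmap f p = 0"
proof
  assume "tangent_space (S1 f) p = {v. Dmat f p *v v = 0}"
  then have "w \<in> {v. Dmat f p *v v = 0}" unfolding tangent by (metis (mono_tags) mem_Collect_eq scaleR_one)
  then show "Fmap f p = 0" using MJ[of p] by simp
next
  assume "Fmap f p = 0"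
  then show "tangent_space (S1 f) p = {v. Dmat f p *v v = 0}" using tangent kernel by simp
qed


lemma isCont_nhds: "isCont g x \<Longrightarrow> (g \<longlongrightarrow> g x) (nhds x)"
  unfolding isCont_def tendsto_at_iff_tendsto_nhds .

abbreviation "G i \<equiv> jac2 (Jdet f) (\<lambda>q. Fmap f q $ i) p"

abbreviation "N i q \<equiv> (P i 1 q)^2 + (P i 2 q)^2"

lemma alg_N: "alg (N i)"
  unfolding power2_eq_square by (intro alg_add alg_mult alg_P)

lemma ev_N:
  assumes "(\<gamma> has_vector_derivative v) (at 0)" "\<gamma> 0 = p" "N i p > 0"
  shows "eventually (\<lambda>t. N i (\<gamma> t) > 0) (nhds 0)"
proof -
  have c: "isCont \<gamma> 0" using has_vector_derivative_continuous[OF assms(1)] .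
  have "isCont (\<lambda>t. N i (\<gamma> t)) 0"
    using continuous_at_compose[OF c alg_cont[OF alg_N], unfolded o_def] by simp
  then have "((\<lambda>t. N i (\<gamma> t)) \<longlongrightarrow> N i (\<gamma> 0)) (nhds 0)"
    by (rule isCont_nhds)
  then have "((\<lambda>t. N i (\<gamma> t)) \<longlongrightarrow> N i p) (nhds 0)" using assms(2) by simp
  then show ?thesis using assms(3) by (rule order_tendstoD(1))
qed

lemma ev_interval: "(\<delta>::real) > 0 \<Longrightarrow> eventually (\<lambda>t. t \<in> {-\<delta><..<\<delta>}) (nhds 0)"
  by (intro eventually_nhds_in_open) auto

lemma par_h: fixes a b c d :: real
  assumes "a*d - b*c = 0" "(a,b) \<noteq> (0,0)"
  shows "c = ((c*a + d*b)/(a^2+b^2)) * a" "d = ((c*a + d*b)/(a^2+b^2)) * b"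
proof -
  have N: "a^2 + b^2 \<noteq> 0" using sq_pos[OF assms(2)] by linarith
  have "c*(a^2+b^2) - (c*a + d*b)*a = - b * (a*d - b*c)" by (simp add: algebra_simps power2_eq_square)
  then have "c*(a^2+b^2) = (c*a + d*b)*a" using assms(1) by simp
  then show "c = ((c*a + d*b)/(a^2+b^2)) * a" using N by (simp add: field_simps)
  have "d*(a^2+b^2) - (c*a + d*b)*b = a * (a*d - b*c)" by (simp add: algebra_simps power2_eq_square)
  then have "d*(a^2+b^2) = (c*a + d*b)*b" using assms(1) by simp
  then show "d = ((c*a + d*b)/(a^2+b^2)) * b" using N by (simp add: field_simps)
qed

lemma G_rel:
  assumes F0: "Fmap f p = 0" and r: "(P i 1 p, P i 2 p) \<noteq> (0,0)" and Gi: "G i = 0"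
  shows "G (oth i) = 0"
proof -
  define k where "k = oth i"
  define h where "h q = (P k 1 q * P i 1 q + P k 2 q * P i 2 q) / N i q" for q
  have Np: "N i p > 0" using sq_pos[OF r] .
  have hd: "h differentiable (at p)" unfolding h_def
    using Np by (intro differentiable_divide alg_differentiable alg_add alg_mult alg_P alg_N) auto
  obtain \<gamma> \<delta> where d0: "\<delta> > 0" and g0: "\<gamma> 0 = p" and gS: "\<forall>t\<in>{-\<delta><..<\<delta>}. \<gamma> t \<in> S1 f"
    and gv: "(\<gamma> has_vector_derivative w) (at 0)" using curve by blast
  have ev: "eventually (\<lambda>t. Fmap f (\<gamma> t) $ k = h (\<gamma> t) * Fmap f (\<gamma> t) $ i) (nhds 0)"
    using ev_N[OF gv g0 Np] ev_interval[OF d0]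
  proof eventually_elim
    case (elim t)
    define q where "q = \<gamma> t"
    have "Jdet f q = 0" using gS elim S1_iff q_def by blast
    then have cr: "P i 1 q * P k 2 q - P i 2 q * P k 1 q = 0" using J_cross k_def by blast
    have rq: "(P i 1 q, P i 2 q) \<noteq> (0,0)" using elim(1) q_def by auto
    have e1: "P k 1 q = h q * P i 1 q" "P k 2 q = h q * P i 2 q"
      using par_h[OF cr rq] by (simp_all add: h_def)
    have Fi: "Fmap f q $ i = pd 1 (Jdet f) q * P i 2 q - pd 2 (Jdet f) q * P i 1 q"
      using fun_cong[OF F_eq[of i], of q] by simp
    have Fk: "Fmap f q $ k = pd 1 (Jdet f) q * P k 2 q - pd 2 (Jdet f) q * P k 1 q"
      using fun_cong[OF F_eq[of k], of q] by simp
    have "Fmap f q $ k = h q * Fmap f q $ i"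
      unfolding Fk Fi e1 by (simp add: algebra_simps)
    then show ?case using q_def by simp
  qed
  have dA: "((\<lambda>t. Fmap f (\<gamma> t) $ k) has_real_derivative G k) (at 0)"
    using comp_deriv[OF alg_grad_deriv[OF alg_F] gv g0] gradF_w by simp
  have "G k = h p * (grad (\<lambda>q. Fmap f q $ i) p \<bullet> w)"
    by (rule along[OF gv g0 dA alg_grad_deriv[OF alg_F] hd _ ev]) (use F0 in simp)
  then show ?thesis using Gi gradF_w k_def by simp
qed

lemma cusp_bwd:
  assumes F0: "Fmap f p = 0" and GG: "G 1 \<noteq> 0 \<or> G 2 \<noteq> 0"
  shows "simple_cusp f p"
proof -
  obtain i where r: "(P i 1 p, P i 2 p) \<noteq> (0,0)" using S1_row[OF pS] by blast
  have Gi: "G i \<noteq> 0"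
  proof
    assume "G i = 0"
    then have "G (oth i) = 0" using G_rel[OF F0 r] by blast
    then show False using \<open>G i = 0\<close> GG oth_cases[of i] by auto
  qed
  define U where "U = {q. P i 1 q \<noteq> 0} \<union> {q. P i 2 q \<noteq> 0}"
  have oU: "open U" unfolding U_def
    by (intro open_Un open_Collect_neq alg_cont_on alg_P continuous_on_const)
  have pU: "p \<in> U" using r by (auto simp: U_def)
  define \<xi> :: "real^2 \<Rightarrow> real^2" where "\<xi> q = vector [- P i 2 q, P i 1 q]" for q
  have \<xi>1: "(\<lambda>q. \<xi> q $ 1) = (\<lambda>q. (\<lambda>q. 0) q - P i 2 q)" by (simp add: \<xi>_def)
  have \<xi>2: "(\<lambda>q. \<xi> q $ 2) = P i 1" by (simp add: \<xi>_def)
  have sm\<xi>: "\<forall>j. smooth_on U (\<lambda>q. \<xi> q $ j)"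
    unfolding forall_2 \<xi>1 \<xi>2 by (intro conjI alg_smooth alg_diff alg_const alg_P)
  have ker: "\<forall>q\<in>U \<inter> S1 f. \<xi> q \<noteq> 0 \<and> Dmat f q *v \<xi> q = 0"
  proof
    fix q assume q: "q \<in> U \<inter> S1 f"
    have "\<xi> q \<noteq> 0" using q by (auto simp: U_def \<xi>_def vec_eq_iff forall_2)
    moreover have "Dmat f q *v \<xi> q = 0"
    proof -
      have cr: "P i 1 q * P (oth i) 2 q - P i 2 q * P (oth i) 1 q = 0"
        using q S1_iff J_cross by blast
      have "(Dmat f q *v \<xi> q) $ j = 0" for j
        using oth_cases[of i] exhaust_2[of j] cr
        by (auto simp: Mv_nth \<xi>_def algebra_simps)
      then show ?thesis by (simp add: vec_eq_iff)
    qed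
    ultimately show "\<xi> q \<noteq> 0 \<and> Dmat f q *v \<xi> q = 0" by blast
  qed
  define \<phi> where "\<phi> q = pd 1 (Jdet f) q * \<xi> q $ 1 + pd 2 (Jdet f) q * \<xi> q $ 2" for q
  have \<phi>F: "\<phi> q = - Fmap f q $ i" for q
    using fun_cong[OF F_eq[of i], of q] by (simp add: \<phi>_def \<xi>_def algebra_simps)
  obtain \<gamma> \<delta> where d0: "\<delta> > 0" and g0: "\<gamma> 0 = p" and gS: "\<forall>t\<in>{-\<delta><..<\<delta>}. \<gamma> t \<in> S1 f"
    and gv: "(\<gamma> has_vector_derivative w) (at 0)" using curve by blast
  have "isCont \<gamma> 0" using has_vector_derivative_continuous[OF gv] .
  then have "(\<gamma> \<longlongrightarrow> \<gamma> 0) (nhds 0)" by (rule isCont_nhds)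
  then have "eventually (\<lambda>t. \<gamma> t \<in> U) (nhds 0)"
    using oU pU g0 by (metis topological_tendstoD)
  then obtain \<delta>1 where d1: "\<delta>1 > 0" and gU: "\<And>t. dist t 0 < \<delta>1 \<Longrightarrow> \<gamma> t \<in> U"
    unfolding eventually_nhds_metric by blast
  define \<delta>' where "\<delta>' = min \<delta> \<delta>1"
  have d': "\<delta>' > 0" using d0 d1 by (simp add: \<delta>'_def)
  have gSU: "\<forall>t\<in>{-\<delta>'<..<\<delta>'}. \<gamma> t \<in> S1 f \<inter> U"
    using gS gU by (auto simp: \<delta>'_def dist_real_def abs_less_iff)
  have Fd: "((\<lambda>q. - Fmap f q $ i) has_derivative (\<lambda>u. - (grad (\<lambda>q. Fmap f q $ i) p \<bullet> u))) (at p)"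
    using has_derivative_minus[OF alg_grad_deriv[OF alg_F]] .
  have "((\<lambda>t. - Fmap f (\<gamma> t) $ i) has_real_derivative - (grad (\<lambda>q. Fmap f q $ i) p \<bullet> w)) (at 0)"
    using comp_deriv[OF Fd gv g0] by simp
  then have dd: "((\<phi> \<circ> \<gamma>) has_real_derivative - G i) (at 0)"
    using gradF_w by (simp add: o_def \<phi>F)
  have "simple_zero_on (S1 f) U \<phi> p"
    unfolding simple_zero_on_def
    using F0 \<phi>F[of p] d' g0 gSU gv w_nz dd Gi
    by (intro conjI exI[of _ \<gamma>] exI[of _ \<delta>'] exI[of _ w] exI[of _ "- G i"]) auto
  moreover have "(\<lambda>q. pd 1 (Jdet f) q * \<xi> q $ 1 + pd 2 (Jdet f) q * \<xi> q $ 2) = \<phi>"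
    by (rule ext) (simp add: \<phi>_def)
  ultimately show ?thesis
    unfolding simple_cusp_def using pS TK_iff F0 oU pU sm\<xi> ker
    by (intro conjI exI[of _ U] exI[of _ \<xi>]) auto
qed


lemma cusp_fwd:
  assumes sc: "simple_cusp f p"
  shows "Fmap f p = 0 \<and> (G 1 \<noteq> 0 \<or> G 2 \<noteq> 0)"
proof -
  have F0: "Fmap f p = 0" using sc TK_iff by (simp add: simple_cusp_def)
  obtain U \<xi> where oU: "open U" and pU: "p \<in> U" and sm\<xi>: "\<forall>i. smooth_on U (\<lambda>q. \<xi> q $ i)"
    and ker: "\<forall>q\<in>U \<inter> S1 f. \<xi> q \<noteq> 0 \<and> Dmat f q *v \<xi> q = 0"
    and sz: "simple_zero_on (S1 f) U (\<lambda>q. pd 1 (Jdet f) q * \<xi> q $ 1 + pd 2 (Jdet f) q * \<xi> q $ 2) p"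
    using sc unfolding simple_cusp_def by blast
  define \<phi> where "\<phi> = (\<lambda>q. pd 1 (Jdet f) q * \<xi> q $ 1 + pd 2 (Jdet f) q * \<xi> q $ 2)"
  obtain \<gamma> \<delta> v d where d0: "\<delta> > 0" and g0: "\<gamma> 0 = p" and gS: "\<forall>t\<in>{-\<delta><..<\<delta>}. \<gamma> t \<in> S1 f \<inter> U"
    and gv: "(\<gamma> has_vector_derivative v) (at 0)" and vnz: "v \<noteq> 0"
    and dd: "((\<phi> \<circ> \<gamma>) has_real_derivative d) (at 0)" and dnz: "d \<noteq> 0"
    using sz unfolding simple_zero_on_def \<phi>_def by blast
  have "v \<in> tangent_space (S1 f) p"
    unfolding tangent_space_def using d0 g0 gS gv by blast
  then obtain c where vc: "v = c *\<^sub>R w" using tangent by blast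
  obtain i where r: "(P i 1 p, P i 2 p) \<noteq> (0,0)" using S1_row[OF pS] by blast
  have Np: "N i p > 0" using sq_pos[OF r] .
  have \<xi>d: "(\<lambda>q. \<xi> q $ j) differentiable (at p)" for j
  proof -
    have "smooth_on U (\<lambda>q. \<xi> q $ j)" using sm\<xi> by blast
    then show ?thesis using pU by (cases rule: smooth_on.cases) auto
  qed
  define h where "h q = (\<xi> q $ 1 * (- P i 2 q) + \<xi> q $ 2 * P i 1 q) / N i q" for q
  have Pd: "P i j differentiable (at p)" for j using alg_differentiable[OF alg_P] .
  have Nd: "N i differentiable (at p)" using alg_differentiable[OF alg_N] .
  have hd: "h differentiable (at p)" unfolding h_def
    using Np
    by (intro differentiable_divide differentiable_add differentiable_mult differentiable_minus
          \<xi>d Pd Nd) auto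
  have ev: "eventually (\<lambda>t. \<phi> (\<gamma> t) = h (\<gamma> t) * (- Fmap f (\<gamma> t) $ i)) (nhds 0)"
    using ev_N[OF gv g0 Np] ev_interval[OF d0]
  proof eventually_elim
    case (elim t)
    define q where "q = \<gamma> t"
    have qSU: "q \<in> U \<inter> S1 f" using gS elim q_def by blast
    have rq: "(P i 1 q, P i 2 q) \<noteq> (0,0)" using elim(1) q_def by auto
    have "(Dmat f q *v \<xi> q) $ i = 0" using ker qSU by simp
    then have hv: "P i 1 q * \<xi> q $ 1 + P i 2 q * \<xi> q $ 2 = 0" by (simp add: Mv_nth)
    have e1: "\<xi> q $ 1 = h q * (- P i 2 q)" "\<xi> q $ 2 = h q * P i 1 q"
      using perp1[OF hv rq] perp2[OF hv rq] by (simp_all add: h_def)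
    have Fi: "Fmap f q $ i = pd 1 (Jdet f) q * P i 2 q - pd 2 (Jdet f) q * P i 1 q"
      using fun_cong[OF F_eq[of i], of q] by simp
    have "\<phi> q = h q * (- Fmap f q $ i)"
      unfolding \<phi>_def Fi e1 by (simp add: algebra_simps)
    then show ?case using q_def by simp
  qed
  have Fd: "((\<lambda>q. - Fmap f q $ i) has_derivative (\<lambda>u. (- grad (\<lambda>q. Fmap f q $ i) p) \<bullet> u)) (at p)"
    using has_derivative_minus[OF alg_grad_deriv[OF alg_F]] by simp
  have dA: "((\<lambda>t. \<phi> (\<gamma> t)) has_real_derivative d) (at 0)" using dd by (simp add: o_def)
  have "d = h p * ((- grad (\<lambda>q. Fmap f q $ i) p) \<bullet> v)"
    by (rule along[OF gv g0 dA Fd hd _ ev]) (use F0 in simp)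
  also have "\<dots> = - h p * c * G i" using vc gradF_w by (simp add: inner_scaleR_right)
  finally have "G i \<noteq> 0" using dnz by auto
  then have "G 1 \<noteq> 0 \<or> G 2 \<noteq> 0" using exhaust_2[of i] by auto
  then show ?thesis using F0 by blast
qed

lemma main_equiv: "simple_cusp f p \<longleftrightarrow> Fmap f p = 0 \<and> (G 1 \<noteq> 0 \<or> G 2 \<noteq> 0)"
  using cusp_fwd cusp_bwd by blast

end


theorem mainTheorem7:
  fixes f :: "real^2 \<Rightarrow> real^2" and p :: "real^2"
  assumes "smooth_map f" and "one_generic f" and "p \<in> S1 f"
  shows "(simple_cusp f p \<longleftrightarrow> Fmap f p = 0 \<and> Dmat (Fmap f) p *v Jperp f p \<noteq> 0)
       \<and> (simple_cusp f p \<longleftrightarrow> Jdet f p = 0 \<and> Fmap f p $ 1 = 0 \<and> Fmap f p $ 2 = 0 \<and>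
            (jac2 (Jdet f) (\<lambda>q. Fmap f q $ 1) p \<noteq> 0 \<or> jac2 (Jdet f) (\<lambda>q. Fmap f q $ 2) p \<noteq> 0))"
proof -
  interpret at_point f p using assms by unfold_locales
  have 1: "Dmat (Fmap f) p *v Jperp f p \<noteq> 0 \<longleftrightarrow>
     (jac2 (Jdet f) (\<lambda>q. Fmap f q $ 1) p \<noteq> 0 \<or> jac2 (Jdet f) (\<lambda>q. Fmap f q $ 2) p \<noteq> 0)"
    by (auto simp: vec_eq_iff forall_2 DF_nth simp del: Jperp_nth)
  have 2: "Fmap f p = 0 \<longleftrightarrow> Fmap f p $ 1 = 0 \<and> Fmap f p $ 2 = 0"
    by (simp add: vec_eq_iff forall_2)
  show ?thesis using main_equiv 1 2 J0 by blast
qed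

end
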